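(* Let $r\in\mathbb Q_{\ge0}$, $N\ge 1$, $L\in\mathbb Z$ with $r=L/N$, $g=\gcd(L,N)$, $\ell=L/g$, $n=N/g$. Let $F$ be a $p$-adic field with residue field $\mathbb F_q$ of characteristic $p>n$. Let $P=\lambda^N+\alpha_1\lambda^{N-1}+\dots+\alpha_{ng}\in F[\lambda]$ have slope $r$ (all roots $\lambda_i\in\bar F$ satisfy $|\lambda_i|=q^{-r}$), with $N$ distinct roots $\lambda_1,\dots,\lambda_N$ satisfying $|\lambda_i-\lambda_j|=q^{-r}$ for all $i\ne j$. Let $R=\lambda^g+a_1\lambda^{g-1}+\dots+a_g\in\mathbb F_q[\lambda]$, $a_j=\operatorname{res}_{\ell j}(\alpha_{nj})$, be its $r$-reduction. Then the map $\lambda_j\mapsto t_r(\lambda_j)$ from the roots of $P$ to the roots of $R$ is an $n$-to-$1$ map onto the set of roots of $R$.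
   Context: $\varpi$ a uniformizer of $F$; $\operatorname{ord}$ the valuation on $\bar F$ with $\operatorname{ord}\varpi=1$; $|x|=q^{-\operatorname{ord}x}$. For $x\in\bar F$ with $\operatorname{ord}x\in\mathbb Z$, $\operatorname{ac}(x)=\operatorname{res}(x/\varpi^{\operatorname{ord}x})\in\bar{\mathbb F}_q$ ($\operatorname{ac}(0)=0$), where $\operatorname{res}$ is reduction of integers of $\bar F$ to $\bar{\mathbb F}_q$; $\operatorname{res}_i(x)=\operatorname{ac}(x)$ if $\operatorname{ord}x=i$, else $0$. For $\lambda\in\bar F$ with $\operatorname{ord}\lambda=r$, $t_r(\lambda)=\operatorname{ac}(\lambda^n/\varpi^\ell)\in\bar{\mathbb F}_q^\times$. *)

theory Defs
  imports "HOL-Computational_Algebra.Polynomial"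
begin

text \<open>
  Abstract rendering of the setting: the type 'a plays the role of an algebraic closure
  of the p-adic field F (given as the subset Fs of 'a), ord is the valuation on 'a
  (meaningful on nonzero elements only), vpi is the uniformizer, and
  res : O -> 'b is the reduction map from the valuation ring of 'a onto the residue
  field 'b (which is then an algebraic closure of F_q).
\<close>

definition val_integral :: "('a::field \<Rightarrow> rat) \<Rightarrow> 'a \<Rightarrow> bool" where
  "val_integral ord x \<longleftrightarrow> x = 0 \<or> ord x \<ge> 0"

definition val_cauchy :: "('a::field \<Rightarrow> rat) \<Rightarrow> (nat \<Rightarrow> 'a) \<Rightarrow> bool" where
  "val_cauchy ord s \<longleftrightarrow>
     (\<forall>M. \<exists>K. \<forall>i\<ge>K. \<forall>j\<ge>K. s i = s j \<or> ord (s i - s j) \<ge> M)"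

definition val_converges :: "('a::field \<Rightarrow> rat) \<Rightarrow> (nat \<Rightarrow> 'a) \<Rightarrow> 'a \<Rightarrow> bool" where
  "val_converges ord s y \<longleftrightarrow> (\<forall>M. \<exists>K. \<forall>i\<ge>K. s i = y \<or> ord (s i - y) \<ge> M)"

definition p_adic_closure_data ::
  "'a::field_char_0 set \<Rightarrow> ('a \<Rightarrow> rat) \<Rightarrow> ('a \<Rightarrow> 'b::field) \<Rightarrow> 'a \<Rightarrow> nat \<Rightarrow> nat \<Rightarrow> bool" where
  "p_adic_closure_data Fs ord res vpi p q \<longleftrightarrow>
     \<comment> \<open>Fs is a subfield\<close>
     0 \<in> Fs \<and> 1 \<in> Fs \<and>
     (\<forall>x\<in>Fs. \<forall>y\<in>Fs. x + y \<in> Fs \<and> x - y \<in> Fs \<and> x * y \<in> Fs) \<and>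
     (\<forall>x\<in>Fs. inverse x \<in> Fs) \<and>
     \<comment> \<open>'a is an algebraic closure of Fs\<close>
     (\<forall>P :: 'a poly. degree P > 0 \<longrightarrow> (\<exists>x. poly P x = 0)) \<and>
     (\<forall>x::'a. \<exists>Q. Q \<noteq> 0 \<and> (\<forall>i. coeff Q i \<in> Fs) \<and> poly Q x = 0) \<and>
     \<comment> \<open>ord is a (rank one) valuation on 'a, discrete on Fs with uniformizer vpi\<close>
     (\<forall>x y. x \<noteq> 0 \<longrightarrow> y \<noteq> 0 \<longrightarrow> ord (x * y) = ord x + ord y) \<and>
     (\<forall>x y. x \<noteq> 0 \<longrightarrow> y \<noteq> 0 \<longrightarrow> x + y \<noteq> 0 \<longrightarrow> ord (x + y) \<ge> min (ord x) (ord y)) \<and>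
     (\<forall>x\<in>Fs. x \<noteq> 0 \<longrightarrow> ord x \<in> \<int>) \<and>
     vpi \<in> Fs \<and> vpi \<noteq> 0 \<and> ord vpi = 1 \<and>
     \<comment> \<open>Fs is complete with respect to ord\<close>
     (\<forall>s. (\<forall>i. s i \<in> Fs) \<longrightarrow> val_cauchy ord s \<longrightarrow> (\<exists>y\<in>Fs. val_converges ord s y)) \<and>
     \<comment> \<open>res is the reduction map from the valuation ring onto the residue field 'b\<close>
     (\<forall>x y. val_integral ord x \<longrightarrow> val_integral ord y \<longrightarrow>
        res (x + y) = res x + res y \<and> res (x * y) = res x * res y) \<and>
     res 1 = 1 \<and>
     (\<forall>x. val_integral ord x \<longrightarrow> (res x = 0 \<longleftrightarrow> x = 0 \<or> ord x > 0)) \<and>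
     (\<forall>b. \<exists>x. val_integral ord x \<and> res x = b) \<and>
     \<comment> \<open>residue field of F is F_q, of characteristic p\<close>
     prime p \<and> of_nat p = (0::'b) \<and>
     finite (res ` {x\<in>Fs. val_integral ord x}) \<and> card (res ` {x\<in>Fs. val_integral ord x}) = q"

definition ac :: "('a::field \<Rightarrow> rat) \<Rightarrow> ('a \<Rightarrow> 'b::field) \<Rightarrow> 'a \<Rightarrow> 'a \<Rightarrow> 'b" where
  "ac ord res vpi x = (if x = 0 then 0 else res (x / vpi powi \<lfloor>ord x\<rfloor>))"

definition res_idx :: "('a::field \<Rightarrow> rat) \<Rightarrow> ('a \<Rightarrow> 'b::field) \<Rightarrow> 'a \<Rightarrow> int \<Rightarrow> 'a \<Rightarrow> 'b" where
  "res_idx ord res vpi i x = (if x \<noteq> 0 \<and> ord x = of_int i then ac ord res vpi x else 0)"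

definition t_r :: "('a::field \<Rightarrow> rat) \<Rightarrow> ('a \<Rightarrow> 'b::field) \<Rightarrow> 'a \<Rightarrow> nat \<Rightarrow> int \<Rightarrow> 'a \<Rightarrow> 'b" where
  "t_r ord res vpi n l x = ac ord res vpi (x ^ n / vpi powi l)"

text \<open>r-reduction of P = lambda^N + alpha_1 lambda^(N-1) + ... + alpha_(ng), N = n g:
  R = lambda^g + a_1 lambda^(g-1) + ... + a_g with a_j = res_(l j)(alpha_(n j)).
  Here alpha_k = coeff P (N - k).\<close>
definition r_reduction ::
  "('a::field \<Rightarrow> rat) \<Rightarrow> ('a \<Rightarrow> 'b::field) \<Rightarrow> 'a \<Rightarrow> nat \<Rightarrow> int \<Rightarrow> nat \<Rightarrow> 'a poly \<Rightarrow> 'b poly" where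
  "r_reduction ord res vpi n l g P =
     monom 1 g + (\<Sum>j\<in>{1..g}. monom (res_idx ord res vpi (l * int j) (coeff P (n * g - n * j))) (g - j))"

end

theory Submission
  imports Defs
begin


context
  fixes Fs :: "'a::field_char_0 set" and ord :: "'a \<Rightarrow> rat" and res :: "'a \<Rightarrow> 'b::field"
    and vpi :: 'a and p q :: nat
  assumes S: "p_adic_closure_data Fs ord res vpi p q"
begin

lemma ord_mult: "x \<noteq> 0 \<Longrightarrow> y \<noteq> 0 \<Longrightarrow> ord (x * y) = ord x + ord y"
  using S unfolding p_adic_closure_data_def by blast

lemma ord_one: "ord 1 = 0"
  using ord_mult[of 1 1] by simp

lemma ord_power: "x \<noteq> 0 \<Longrightarrow> ord (x ^ k) = of_nat k * ord x"
  by (induction k) (auto simp: ord_one ord_mult algebra_simps)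

lemma ord_divide: "x \<noteq> 0 \<Longrightarrow> y \<noteq> 0 \<Longrightarrow> ord (x / y) = ord x - ord y"
  using ord_mult[of "x / y" y] by simp

lemma ord_minus: "x \<noteq> 0 \<Longrightarrow> ord (- x) = ord x"
proof -
  assume x: "x \<noteq> 0"
  have "ord ((-1) * (-1)) = ord (-1) + ord (-1::'a)" by (rule ord_mult) auto
  hence m: "ord (-1::'a) = 0" using ord_one by simp
  have "ord ((-1) * x) = ord (-1) + ord x" using x by (intro ord_mult) auto
  thus ?thesis using m by simp
qed

lemma ord_add: "x \<noteq> 0 \<Longrightarrow> y \<noteq> 0 \<Longrightarrow> x + y \<noteq> 0 \<Longrightarrow> ord (x + y) \<ge> min (ord x) (ord y)"
  using S unfolding p_adic_closure_data_def by blast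

lemma int_add: "val_integral ord x \<Longrightarrow> val_integral ord y \<Longrightarrow> val_integral ord (x + y)"
  using ord_add[of x y] unfolding val_integral_def by (cases "x = 0"; cases "y = 0"; cases "x + y = 0") force+

lemma int_mult: "val_integral ord x \<Longrightarrow> val_integral ord y \<Longrightarrow> val_integral ord (x * y)"
  using ord_mult[of x y] unfolding val_integral_def by (cases "x = 0"; cases "y = 0") auto

lemma int_minus: "val_integral ord x \<Longrightarrow> val_integral ord (- x)"
  using ord_minus[of x] unfolding val_integral_def by (cases "x = 0") auto

lemma int_0: "val_integral ord 0" and int_1: "val_integral ord 1"
  by (auto simp: val_integral_def ord_one)

lemma res_add: "val_integral ord x \<Longrightarrow> val_integral ord y \<Longrightarrow> res (x + y) = res x + res y"
  using S unfolding p_adic_closure_data_def by blast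

lemma res_mult: "val_integral ord x \<Longrightarrow> val_integral ord y \<Longrightarrow> res (x * y) = res x * res y"
  using S unfolding p_adic_closure_data_def by blast

lemma res_one: "res 1 = 1"
  using S unfolding p_adic_closure_data_def by blast

lemma res_0: "res 0 = 0"
proof -
  have "res (0 + 0) = res 0 + res 0" using res_add[OF int_0 int_0] .
  thus ?thesis by (metis add_cancel_right_right add_0)
qed

lemma res_minus: "val_integral ord x \<Longrightarrow> res (- x) = - res x"
  using res_add[of x "-x"] int_minus[of x] res_0 by (simp add: eq_neg_iff_add_eq_0 add.commute)

lemma res_diff: "val_integral ord x \<Longrightarrow> val_integral ord y \<Longrightarrow> res (x - y) = res x - res y"
  using res_add[of x "-y"] int_minus[of y] res_minus[of y] by simp

lemma int_power: "val_integral ord x \<Longrightarrow> val_integral ord (x ^ k)"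
  by (induction k) (auto intro: int_mult int_1)

lemma res_power: "val_integral ord x \<Longrightarrow> res (x ^ k) = res x ^ k"
  by (induction k) (auto simp: res_one res_mult int_power)

lemma res_zero_iff: "val_integral ord x \<Longrightarrow> (res x = 0 \<longleftrightarrow> x = 0 \<or> ord x > 0)"
  using S unfolding p_adic_closure_data_def by blast

lemma prod_hom:
  assumes "finite A" "\<forall>a\<in>A. val_integral ord (u a)"
  shows "\<forall>i. val_integral ord (coeff (\<Prod>a\<in>A. [:- u a, 1:]) i) \<and>
             res (coeff (\<Prod>a\<in>A. [:- u a, 1:]) i) = coeff (\<Prod>a\<in>A. [:- res (u a), 1:]) i"
  using assms
proof (induction A rule: finite_induct)
  case empty
  show ?case by (auto simp: coeff_1 int_0 int_1 res_0 res_one)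
next
  case (insert a A)
  define Q where "Q = (\<Prod>a\<in>A. [:- u a, 1:])"
  define Qb where "Qb = (\<Prod>a\<in>A. [:- res (u a), 1:])"
  have IH: "\<And>i. val_integral ord (coeff Q i) \<and> res (coeff Q i) = coeff Qb i"
    using insert unfolding Q_def Qb_def by auto
  have ua: "val_integral ord (u a)" using insert by auto
  have e1: "\<And>c::'a. [:- c, 1:] * Q = smult (- c) Q + pCons 0 Q"
    by (simp add: mult_pCons_left)
  have e2: "\<And>c::'b. [:- c, 1:] * Qb = smult (- c) Qb + pCons 0 Qb"
    by (simp add: mult_pCons_left)
  show ?case
  proof
    fix i
    have c1: "coeff ([:- u a, 1:] * Q) i = - u a * coeff Q i + (case i of 0 \<Rightarrow> 0 | Suc j \<Rightarrow> coeff Q j)"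
      by (simp add: e1 coeff_pCons)
    have c2: "coeff ([:- res (u a), 1:] * Qb) i = - res (u a) * coeff Qb i + (case i of 0 \<Rightarrow> 0 | Suc j \<Rightarrow> coeff Qb j)"
      by (simp add: e2 coeff_pCons)
    have ic: "val_integral ord (case i of 0 \<Rightarrow> 0 | Suc j \<Rightarrow> coeff Q j)"
      using IH int_0 by (cases i) auto
    have rc: "res (case i of 0 \<Rightarrow> 0 | Suc j \<Rightarrow> coeff Q j) = (case i of 0 \<Rightarrow> 0 | Suc j \<Rightarrow> coeff Qb j)"
      using IH res_0 by (cases i) auto
    have im: "val_integral ord (- u a * coeff Q i)"
      using IH ua int_minus int_mult by blast
    show "val_integral ord (coeff (\<Prod>a\<in>insert a A. [:- u a, 1:]) i) \<and>
          res (coeff (\<Prod>a\<in>insert a A. [:- u a, 1:]) i) = coeff (\<Prod>a\<in>insert a A. [:- res (u a), 1:]) i"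
      using insert(1,2) c1 c2 ic rc im IH ua
      by (simp add: Q_def[symmetric] Qb_def[symmetric] int_add res_add res_mult res_minus int_minus
          del: mult_minus_left minus_mult_left)
  qed
qed

end


lemma monic_split:
  fixes P :: "'a::field poly"
  assumes fin: "finite Z" and deg: "degree P = card Z" and lc: "lead_coeff P = 1"
    and rt: "\<forall>x\<in>Z. poly P x = 0"
  shows "P = (\<Prod>x\<in>Z. [:- x, 1:])"
proof -
  have "finite S \<Longrightarrow> S \<subseteq> Z \<Longrightarrow> (\<Prod>x\<in>S. [:- x, 1:]) dvd P" for S
  proof (induction S rule: finite_induct)
    case empty then show ?case by simp
  next
    case (insert a S)
    then obtain Q where Q: "P = (\<Prod>x\<in>S. [:- x, 1:]) * Q" by (auto elim: dvdE)
    have "poly (\<Prod>x\<in>S. [:- x, 1:]) a \<noteq> 0" using insert by (auto simp: poly_prod)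
    moreover have "poly P a = 0" using insert rt by auto
    ultimately have "poly Q a = 0" using Q by simp
    then obtain Q' where "Q = [:- a, 1:] * Q'" using poly_eq_0_iff_dvd by (metis dvdE)
    hence "P = ([:- a, 1:] * (\<Prod>x\<in>S. [:- x, 1:])) * Q'" using Q by (simp only: mult_ac)
    moreover have "(\<Prod>x\<in>insert a S. [:- x, 1:]) = [:- a, 1:] * (\<Prod>x\<in>S. [:- x, 1:])"
      using insert(1,2) by simp
    ultimately show ?case by simp
  qed
  then obtain Q where Q: "P = (\<Prod>x\<in>Z. [:- x, 1:]) * Q" using fin by (auto elim: dvdE)
  have P0: "P \<noteq> 0" using lc by auto
  hence Q0: "Q \<noteq> 0" using Q by auto
  have dprod: "degree (\<Prod>x\<in>Z. [:- x, 1::'a:]) = card Z"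
    by (subst degree_prod_sum_eq) auto
  have lprod: "lead_coeff (\<Prod>x\<in>Z. [:- x, 1::'a:]) = 1"
    by (simp add: lead_coeff_prod)
  have "degree P = card Z + degree Q" using Q Q0 dprod lprod
    by (subst Q, subst degree_mult_eq) (auto simp del: lead_coeff_prod)
  hence dQ: "degree Q = 0" using deg by simp
  have "lead_coeff P = lead_coeff Q" using Q lprod by (simp add: lead_coeff_mult)
  hence "coeff Q 0 = 1" using lc dQ by simp
  hence "Q = 1" using dQ by (metis degree_0_id one_pCons)
  thus ?thesis using Q by simp
qed

lemma counting:
  fixes ub :: "'a \<Rightarrow> 'b::field" and R :: "'b poly"
  assumes fin: "finite Z" and cZ: "card Z = n * g" and n1: "n \<ge> 1"
    and inj: "inj_on ub Z"
    and id: "\<forall>z. (\<Prod>x\<in>Z. (z - ub x)) = poly R (z ^ n)"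
    and R0: "R \<noteq> 0" and dR: "degree R \<le> g"
  shows "(\<forall>x\<in>Z. poly R (ub x ^ n) = 0) \<and> (\<lambda>x. ub x ^ n) ` Z = {y. poly R y = 0}
     \<and> (\<forall>y. poly R y = 0 \<longrightarrow> card {x\<in>Z. ub x ^ n = y} = n)"
proof -
  define f where "f x = ub x ^ n" for x
  define T where "T = f ` Z"
  have a: "\<forall>x\<in>Z. poly R (ub x ^ n) = 0"
  proof
    fix x assume "x \<in> Z"
    hence "(\<Prod>y\<in>Z. (ub x - ub y)) = 0" using fin by (intro prod_zero) auto
    thus "poly R (ub x ^ n) = 0" using id by metis
  qed
  have TR: "T \<subseteq> {y. poly R y = 0}" using a unfolding T_def f_def by auto
  have finR: "finite {y. poly R y = 0}" using R0 poly_roots_finite by blast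
  have cR: "card {y. poly R y = 0} \<le> g" using card_poly_roots_bound[OF R0] dR by linarith
  have fib: "card {x\<in>Z. f x = y} \<le> n" for y
  proof -
    define M where "M = (monom 1 n - [:y:] :: 'b poly)"
    have cM: "coeff M n = 1" using n1 unfolding M_def by (cases n) (simp_all add: coeff_monom)
    hence M0: "M \<noteq> 0" by auto
    have dM: "degree M \<le> n" unfolding M_def
      by (rule degree_diff_le) (auto simp: degree_monom_le)
    have "ub ` {x\<in>Z. f x = y} \<subseteq> {z. poly M z = 0}"
      unfolding M_def f_def by (auto simp: poly_monom)
    hence "card (ub ` {x\<in>Z. f x = y}) \<le> card {z. poly M z = 0}"
      using poly_roots_finite[OF M0] by (intro card_mono) auto
    also have "\<dots> \<le> n" using card_poly_roots_bound[OF M0] dM by linarith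
    finally show ?thesis using inj by (subst (asm) card_image) (auto intro: inj_on_subset)
  qed
  have sumZ: "card Z = (\<Sum>y\<in>T. card {x\<in>Z. f x = y})"
    using sum.image_gen[OF fin, of "\<lambda>_. 1::nat" f] unfolding T_def by simp
  have finT: "finite T" unfolding T_def using fin by simp
  have le1: "(\<Sum>y\<in>T. card {x\<in>Z. f x = y}) \<le> n * card T"
    using sum_bounded_above[of T "\<lambda>y. card {x\<in>Z. f x = y}" n] fib by (simp add: mult.commute)
  have cT: "card T \<le> g" using card_mono[OF finR TR] cR by linarith
  have "n * g \<le> n * card T" using le1 sumZ cZ by simp
  hence cTg: "card T = g" using cT n1 by simp
  have TeqR: "T = {y. poly R y = 0}"
    using card_subset_eq[OF finR TR] cTg cR card_mono[OF finR TR] by linarith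
  have eqs: "(\<Sum>y\<in>T. card {x\<in>Z. f x = y}) = (\<Sum>y\<in>T. n)" using sumZ cZ cTg by (simp add: mult.commute)
  have c: "\<forall>y. poly R y = 0 \<longrightarrow> card {x\<in>Z. ub x ^ n = y} = n"
  proof (intro allI impI)
    fix y assume "poly R y = 0"
    hence "y \<in> T" using TeqR by simp
    from sum_mono_inv[OF eqs fib this finT] show "card {x\<in>Z. ub x ^ n = y} = n"
      unfolding f_def .
  qed
  show ?thesis using a c TeqR unfolding T_def f_def by auto
qed

lemma sum_dvd_reindex:
  fixes G :: "nat \<Rightarrow> 'b::comm_monoid_add"
  assumes n1: "n \<ge> 1"
  shows "(\<Sum>k\<le>n*g. if n dvd k then G (k div n) else 0) = (\<Sum>j\<le>g. G j)"
proof -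
  have "(\<Sum>k\<le>n*g. if n dvd k then G (k div n) else 0) = (\<Sum>k\<in>{k\<in>{..n*g}. n dvd k}. G (k div n))"
    by (rule sum.inter_filter[symmetric]) simp
  also have "{k\<in>{..n*g}. n dvd k} = (\<lambda>j. n * j) ` {..g}"
    using n1 by (auto elim!: dvdE)
  also have "(\<Sum>k\<in>(\<lambda>j. n * j) ` {..g}. G (k div n)) = (\<Sum>j\<le>g. G (n * j div n))"
    using n1 by (subst sum.reindex) (auto simp: inj_on_def)
  also have "\<dots> = (\<Sum>j\<le>g. G j)" using n1 by simp
  finally show ?thesis .
qed

lemma poly_r_reduction:
  "poly (r_reduction ord res vpi n l g P) y =
     y ^ g + (\<Sum>j\<in>{1..g}. res_idx ord res vpi (l * int j) (coeff P (n * g - n * j)) * y ^ (g - j))"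
  by (simp add: r_reduction_def poly_sum poly_monom)



theorem lemma3p4:
  fixes Fs :: "'a::field_char_0 set" and ord :: "'a \<Rightarrow> rat" and res :: "'a \<Rightarrow> 'b::field"
    and vpi :: 'a and p q :: nat
    and r :: rat and N :: nat and L :: int and g n :: nat and l :: int
    and P :: "'a poly"
  assumes hsetting: "p_adic_closure_data Fs ord res vpi p q"
    and r_nonneg: "r \<ge> 0" and N_pos: "N \<ge> 1" and r_eq: "r = of_int L / of_nat N"
    and g_def: "int g = gcd L (int N)" and l_def: "l * int g = L" and n_def: "n * g = N"
    and p_gt: "p > n"
    and P_coeffs: "\<forall>i. coeff P i \<in> Fs"
    and P_monic: "degree P = N" "lead_coeff P = 1"
    and P_slope: "\<forall>x. poly P x = 0 \<longrightarrow> x \<noteq> 0 \<and> ord x = r"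
    and P_distinct: "card {x. poly P x = 0} = N"
    and P_sep: "\<forall>x y. poly P x = 0 \<longrightarrow> poly P y = 0 \<longrightarrow> x \<noteq> y \<longrightarrow> ord (x - y) = r"
  shows "(\<forall>x. poly P x = 0 \<longrightarrow> poly (r_reduction ord res vpi n l g P) (t_r ord res vpi n l x) = 0)
       \<and> t_r ord res vpi n l ` {x. poly P x = 0} = {y. poly (r_reduction ord res vpi n l g P) y = 0}
       \<and> (\<forall>y. poly (r_reduction ord res vpi n l g P) y = 0 \<longrightarrow>
              card {x. poly P x = 0 \<and> t_r ord res vpi n l x = y} = n)"
proof -
  note S = hsetting
  have algc: "\<And>Q :: 'a poly. degree Q > 0 \<Longrightarrow> \<exists>x. poly Q x = 0"
    using S unfolding p_adic_closure_data_def by blast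
  have ordFs: "\<And>x. x \<in> Fs \<Longrightarrow> x \<noteq> 0 \<Longrightarrow> ord x \<in> \<int>"
    using S unfolding p_adic_closure_data_def by blast
  have vpi0: "vpi \<noteq> 0" and ordvpi: "ord vpi = 1"
    using S unfolding p_adic_closure_data_def by blast+
  define Z where "Z = {x. poly P x = 0}"
  have finZ: "finite Z" using P_distinct N_pos unfolding Z_def by (metis card.infinite not_one_le_zero)
  have cZ: "card Z = N" using P_distinct unfolding Z_def .
  have Pprod: "P = (\<Prod>x\<in>Z. [:- x, 1:])"
    by (rule monic_split) (use finZ cZ P_monic in \<open>auto simp: Z_def\<close>)
  have g1: "g \<ge> 1" using n_def N_pos by (cases g) auto
  have n1: "n \<ge> 1" using n_def N_pos by (cases n) auto
  have L0: "L \<ge> 0"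
  proof (rule ccontr)
    assume "\<not> L \<ge> 0"
    hence "(of_int L :: rat) / of_nat N < 0" using N_pos by (simp add: divide_neg_pos)
    thus False using r_eq r_nonneg by simp
  qed
  have l0: "l \<ge> 0"
  proof (rule ccontr)
    assume "\<not> l \<ge> 0"
    hence "l * int g < 0" using g1 by (intro mult_neg_pos) auto
    thus False using L0 l_def by simp
  qed
  define ln where "ln = nat l"
  have lln: "l = int ln" using l0 ln_def by simp
  have cop: "coprime l (int n)"
  proof -
    have "int g * gcd l (int n) = gcd (int g * l) (int g * int n)"
      using gcd_mult_distrib_int[of "int g" l "int n"] by simp
    also have "int g * l = L" using l_def by (simp add: mult.commute)
    also have "int g * int n = int N" using n_def by (simp flip: of_nat_mult add: mult.commute)
    also have "gcd L (int N) = int g" using g_def by simp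
    finally have "gcd l (int n) = 1" using g1 by simp
    thus ?thesis by (simp add: coprime_iff_gcd_eq_1)
  qed
  have r_ln: "r = of_int l / of_nat n"
  proof -
    have "(of_int L :: rat) = of_int l * of_nat g" using l_def by (metis of_int_mult of_int_of_nat_eq)
    moreover have "(of_nat N :: rat) = of_nat n * of_nat g" using n_def by (metis of_nat_mult)
    ultimately show ?thesis using r_eq g1 by simp
  qed
  obtain pi0 where pi0: "pi0 ^ n = vpi ^ ln"
  proof -
    define M where "M = (monom 1 n - [:vpi ^ ln:] :: 'a poly)"
    have cM: "coeff M n = 1" using n1 unfolding M_def by (cases n) (simp_all add: coeff_monom)
    have dM: "degree M \<le> n" unfolding M_def
      by (rule degree_diff_le) (auto simp: degree_monom_le)
    have "degree M = n" using cM dM by (metis le_degree le_antisym one_neq_zero)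
    then obtain x where "poly M x = 0" using algc n1 by fastforce
    thus ?thesis using that unfolding M_def by (simp add: poly_monom)
  qed
  have pi00: "pi0 \<noteq> 0" 
  proof
    assume "pi0 = 0"
    hence "vpi ^ ln = 0" using pi0 n1 by (metis power_0_left not_one_le_zero)
    thus False using vpi0 by simp
  qed
  have ordpi: "ord pi0 = of_int l / of_nat n"
  proof -
    have "of_nat n * ord pi0 = of_nat ln * ord vpi"
      using ord_power[OF S pi00, of n] ord_power[OF S vpi0, of ln] pi0 by simp
    thus ?thesis using ordvpi n1 lln by (simp add: field_simps)
  qed
  define u where "u x = x / pi0" for x
  define ub where "ub x = res (u x)" for x
  have ordu: "x \<in> Z \<Longrightarrow> u x \<noteq> 0 \<and> ord (u x) = 0" for x
    using P_slope pi00 ord_divide[OF S, of x pi0] ordpi r_ln unfolding u_def Z_def by auto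
  have intu: "x \<in> Z \<Longrightarrow> val_integral ord (u x)" for x
    using ordu unfolding val_integral_def by auto
  have injub: "inj_on ub Z"
  proof (rule inj_onI, rule ccontr)
    fix x y assume xy: "x \<in> Z" "y \<in> Z" "ub x = ub y" "x \<noteq> y"
    have d: "u x - u y = (x - y) / pi0" unfolding u_def by (simp add: diff_divide_distrib)
    have "ord (x - y) = r" using P_sep xy unfolding Z_def by auto
    hence od: "ord (u x - u y) = 0" "u x - u y \<noteq> 0"
      using d ord_divide[OF S, of "x - y" pi0] pi00 xy(4) ordpi r_ln by auto
    have "val_integral ord (u x - u y)" using od unfolding val_integral_def by simp
    hence "res (u x - u y) \<noteq> 0" using res_zero_iff[OF S] od by auto
    thus False using res_diff[OF S intu[OF xy(1)] intu[OF xy(2)]] xy(3) unfolding ub_def by simp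
  qed
  have tr: "x \<in> Z \<Longrightarrow> t_r ord res vpi n l x = ub x ^ n" for x
  proof -
    assume xZ: "x \<in> Z"
    have "x = u x * pi0" using pi00 unfolding u_def by simp
    hence "x ^ n = u x ^ n * vpi ^ ln" using pi0 by (metis power_mult_distrib)
    hence "x ^ n / vpi powi l = u x ^ n"
      using vpi0 lln by simp
    moreover have "ord (u x ^ n) = 0" "u x ^ n \<noteq> 0"
      using ordu[OF xZ] ord_power[OF S, of "u x" n] by auto
    ultimately show ?thesis
      unfolding t_r_def ac_def ub_def using res_power[OF S intu[OF xZ]] by simp
  qed
  define F where "F = (\<Prod>x\<in>Z. [:- u x, 1:])"
  define Fb where "Fb = (\<Prod>x\<in>Z. [:- ub x, 1:])"
  have hom: "\<And>i. val_integral ord (coeff F i) \<and> res (coeff F i) = coeff Fb i"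
    using prod_hom[OF S finZ, of u] intu unfolding F_def Fb_def ub_def by auto
  have Feq: "F = smult (1 / pi0 ^ N) (pcompose P [:0, pi0:])"
  proof -
    have "poly F z = poly (smult (1 / pi0 ^ N) (pcompose P [:0, pi0:])) z" for z
    proof -
      have "poly (smult (1 / pi0 ^ N) (pcompose P [:0, pi0:])) z = (\<Prod>x\<in>Z. (pi0 * z - x)) / pi0 ^ N"
      proof -
        have "poly P (pi0 * z) = (\<Prod>x\<in>Z. (pi0 * z - x))"
          by (subst Pprod) (simp add: poly_prod)
        thus ?thesis by (simp add: poly_pcompose mult.commute)
      qed
      also have "(\<Prod>x\<in>Z. (pi0 * z - x)) = (\<Prod>x\<in>Z. pi0 * (z - u x))"
        using pi00 unfolding u_def by (intro prod.cong) (auto simp: field_simps)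
      also have "\<dots> = pi0 ^ N * (\<Prod>x\<in>Z. (z - u x))"
        by (simp add: prod.distrib cZ)
      finally show ?thesis using pi00 unfolding F_def by (simp add: poly_prod)
    qed
    thus ?thesis by (intro poly_eq_poly_eq_iff[THEN iffD1] ext)
  qed
  have coeffF: "m \<le> N \<Longrightarrow> coeff F m = coeff P m / pi0 ^ (N - m)" for m
  proof -
    assume "m \<le> N"
    hence "pi0 ^ N = pi0 ^ m * pi0 ^ (N - m)" by (simp flip: power_add)
    thus ?thesis using pi00 by (simp add: Feq coeff_pcompose_linear field_simps)
  qed
  define A where "A j = (if j = 0 then 1 else res_idx ord res vpi (l * int j) (coeff P (n * g - n * j)))" for j
  have key: "m \<le> N \<Longrightarrow> coeff Fb m = (if n dvd (N - m) then A ((N - m) div n) else 0)" for m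
  proof -
    assume mN: "m \<le> N"
    define k where "k = N - m"
    define \<alpha> where "\<alpha> = coeff P m"
    define c where "c = coeff F m"
    have cdef: "c = \<alpha> / pi0 ^ k" using coeffF[OF mN] unfolding c_def \<alpha>_def k_def .
    have ic: "val_integral ord c" and rc: "coeff Fb m = res c" using hom[of m] unfolding c_def by auto
    have pk0: "pi0 ^ k \<noteq> 0" using pi00 by simp
    show ?thesis
    proof (cases "n dvd k")
      case False
      have "res c = 0"
      proof (cases "\<alpha> = 0")
        case True
        thus ?thesis using cdef res_0[OF S] by simp
      next
        case a0: False
        have c0: "c \<noteq> 0" using cdef a0 pk0 by simp
        have "ord \<alpha> \<in> \<int>" using ordFs a0 P_coeffs unfolding \<alpha>_def by auto
        then obtain a where oa: "ord \<alpha> = of_int a" by (elim Ints_cases)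
        have oc: "ord c = of_int a - of_nat k * (of_int l / of_nat n)"
          using cdef ord_divide[OF S a0 pk0] ord_power[OF S pi00, of k] oa ordpi by simp
        have oc0: "ord c \<ge> 0" using ic c0 unfolding val_integral_def by auto
        have "ord c \<noteq> 0"
        proof
          assume "ord c = 0"
          hence "(of_int a :: rat) * of_nat n = of_nat k * of_int l" using oc n1 by (simp add: field_simps)
          hence "(of_int (a * int n) :: rat) = of_int (int k * l)" by simp
          hence "a * int n = int k * l" using of_int_eq_iff by blast
          hence "int n dvd int k * l" by (metis dvd_triv_right)
          hence "int n dvd int k" using cop by (metis coprime_commute coprime_dvd_mult_left_iff)
          thus False using False by simp
        qed
        hence "ord c > 0" using oc0 by simp
        thus ?thesis using res_zero_iff[OF S ic] by simp
      qed
      thus ?thesis using rc False unfolding k_def by simp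
    next
      case True
      then obtain j where kj: "k = n * j" by (elim dvdE)
      have jdiv: "k div n = j" using kj n1 by simp
      have jg: "j \<le> g" 
      proof -
        have "n * j \<le> n * g" using kj k_def mN n_def by simp
        thus ?thesis using n1 by simp
      qed
      have pk: "pi0 ^ k = vpi ^ (ln * j)" using kj pi0 by (simp add: power_mult)
      have mform: "m = n * g - n * j" using kj k_def mN n_def by simp
      show ?thesis
      proof (cases "j = 0")
        case True
        hence "m = N" using kj k_def mN by simp
        hence "\<alpha> = 1" using P_monic unfolding \<alpha>_def by simp
        hence "c = 1" using cdef kj True by simp
        thus ?thesis using rc res_one[OF S] True jdiv \<open>k = n * j\<close> k_def by (simp add: A_def)
      next
        case j0: False
        have Aj: "A ((N - m) div n) = res_idx ord res vpi (l * int j) \<alpha>"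
          using j0 jdiv mform unfolding A_def \<alpha>_def k_def[symmetric] by simp
        have lj: "l * int j = int (ln * j)" using lln by simp
        have "res c = res_idx ord res vpi (l * int j) \<alpha>"
        proof (cases "\<alpha> = 0")
          case True
          thus ?thesis using cdef res_0[OF S] unfolding res_idx_def by simp
        next
          case a0: False
          have vp0: "vpi ^ (ln * j) \<noteq> 0" using vpi0 by simp
          have oc: "ord c = ord \<alpha> - of_nat (ln * j)"
            using cdef pk ord_divide[OF S a0 vp0] ord_power[OF S vpi0, of "ln * j"] ordvpi by simp
          show ?thesis
          proof (cases "ord \<alpha> = of_int (l * int j)")
            case True
            have "ord \<alpha> = of_int (int (ln * j))" using True lj by simp
            hence fl: "\<lfloor>ord \<alpha>\<rfloor> = int (ln * j)" by (simp only: floor_of_int)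
            have "ac ord res vpi \<alpha> = res c"
              unfolding ac_def using a0 cdef pk by (simp only: fl power_int_of_nat if_False)
            thus ?thesis unfolding res_idx_def using a0 True by simp
          next
            case False
            have c0: "c \<noteq> 0" using cdef a0 pk0 by simp
            have "ord c \<ge> 0" using ic c0 unfolding val_integral_def by auto
            moreover have "ord c \<noteq> 0" using oc False lj by simp
            ultimately have "ord c > 0" by simp
            hence "res c = 0" using res_zero_iff[OF S ic] by simp
            thus ?thesis unfolding res_idx_def using False by simp
          qed
        qed
        thus ?thesis using rc Aj True unfolding k_def by simp
      qed
    qed
  qed
  have degFb: "degree Fb = N" unfolding Fb_def by (subst degree_prod_sum_eq) (auto simp: cZ)
  have ident: "\<forall>z. (\<Prod>x\<in>Z. (z - ub x)) = poly (r_reduction ord res vpi n l g P) (z ^ n)"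
  proof
    fix z
    have "(\<Prod>x\<in>Z. (z - ub x)) = (\<Sum>m\<le>N. coeff Fb m * z ^ m)"
    proof -
      have "poly Fb z = (\<Prod>x\<in>Z. (z - ub x))" by (simp add: Fb_def poly_prod)
      thus ?thesis using poly_altdef[of Fb z] degFb by simp
    qed
    also have "\<dots> = (\<Sum>m\<le>N. (if n dvd (N - m) then A ((N - m) div n) * z ^ m else 0))"
      by (intro sum.cong) (auto simp: key)
    also have "\<dots> = (\<Sum>k\<le>N. (if n dvd k then A (k div n) * z ^ (N - k) else 0))"
    proof -
      have "(\<Sum>m\<in>{0..N}. (if n dvd (N - m) then A ((N - m) div n) * z ^ m else 0))
          = (\<Sum>k\<in>{0..N}. (if n dvd (N - (N + 0 - k)) then A ((N - (N + 0 - k)) div n) * z ^ (N + 0 - k) else 0))"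
        by (rule sum.atLeastAtMost_rev)
      also have "\<dots> = (\<Sum>k\<in>{0..N}. (if n dvd k then A (k div n) * z ^ (N - k) else 0))"
        by (intro sum.cong) auto
      finally show ?thesis by (simp add: atLeast0AtMost)
    qed
    also have "\<dots> = (\<Sum>j\<le>g. A j * z ^ (N - n * j))"
      using sum_dvd_reindex[OF n1, where g=g and G="\<lambda>j. A j * z ^ (N - n * j)"] n_def
      by (simp add: cong: if_cong)
    also have "\<dots> = poly (r_reduction ord res vpi n l g P) (z ^ n)"
    proof -
      have e: "{..g} = insert 0 {1..g}" by auto
      have "(\<Sum>j\<le>g. A j * z ^ (N - n * j)) = z ^ N + (\<Sum>j\<in>{1..g}. A j * z ^ (N - n * j))"
        by (subst e, subst sum.insert) (auto simp: A_def)
      also have "(\<Sum>j\<in>{1..g}. A j * z ^ (N - n * j)) =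
          (\<Sum>j\<in>{1..g}. res_idx ord res vpi (l * int j) (coeff P (n * g - n * j)) * (z ^ n) ^ (g - j))"
        by (intro sum.cong) (auto simp: A_def power_mult[symmetric] n_def[symmetric] diff_mult_distrib2 mult.commute)
      finally show ?thesis by (simp add: poly_r_reduction power_mult[symmetric] n_def[symmetric] mult.commute)
    qed
    finally show "(\<Prod>x\<in>Z. (z - ub x)) = poly (r_reduction ord res vpi n l g P) (z ^ n)" .
  qed
  have cR: "coeff (r_reduction ord res vpi n l g P) i =
     (if i = g then 1 else 0) + (\<Sum>j\<in>{1..g}. if g - j = i then res_idx ord res vpi (l * int j) (coeff P (n * g - n * j)) else 0)" for i
    by (simp add: r_reduction_def coeff_sum coeff_monom)
  have cRg: "coeff (r_reduction ord res vpi n l g P) g = 1"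
  proof -
    have "(\<Sum>j\<in>{1..g}. if g - j = g then res_idx ord res vpi (l * int j) (coeff P (n * g - n * j)) else 0) = 0"
      by (intro sum.neutral) auto
    thus ?thesis by (simp add: cR)
  qed
  have R0: "r_reduction ord res vpi n l g P \<noteq> 0" using cRg by auto
  have dR: "degree (r_reduction ord res vpi n l g P) \<le> g"
  proof (rule degree_le, intro allI impI)
    fix i assume "g < i"
    thus "coeff (r_reduction ord res vpi n l g P) i = 0" by (subst cR) (auto intro: sum.neutral)
  qed
  have C: "(\<forall>x\<in>Z. poly (r_reduction ord res vpi n l g P) (ub x ^ n) = 0) \<and>
     (\<lambda>x. ub x ^ n) ` Z = {y. poly (r_reduction ord res vpi n l g P) y = 0}
     \<and> (\<forall>y. poly (r_reduction ord res vpi n l g P) y = 0 \<longrightarrow> card {x\<in>Z. ub x ^ n = y} = n)"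
    by (rule counting[OF finZ _ n1 injub ident R0 dR]) (simp add: cZ n_def)
  have im: "t_r ord res vpi n l ` Z = (\<lambda>x. ub x ^ n) ` Z" using tr by (intro image_cong) auto
  have fibeq: "{x. poly P x = 0 \<and> t_r ord res vpi n l x = y} = {x\<in>Z. ub x ^ n = y}" for y
    using tr unfolding Z_def by auto
  show ?thesis using C im fibeq tr unfolding Z_def by auto
qed

end
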